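(* Let $G$ be a $4$-edge-connected graph and $u,v$ adjacent vertices of $G$ such that $v$ has at least $3$ edges to $V(G)\setminus\{u,v\}$. Let $va,vb$ be two distinct such edges with $a\ne b$, $a,b\notin\{u,v\}$, and let $G_1=G-u-v+ab$ (delete $u$ and $v$, add a new edge $ab$). If $G_1\in\mathcal{S}_3$, then $G\in\mathcal{S}_3$.
   Context: Graphs may have parallel edges but no loops. $G\in\mathcal{S}_3$ means: for every $\beta:V(G)\to\mathbb{Z}_3$ with $\sum_v\beta(v)\equiv0\pmod3$ there is a strongly-connected orientation $D$ of $G$ with $d^+_D(v)-d^-_D(v)\equiv\beta(v)\pmod3$ for all $v$. *)

theory Defs
  imports Main
begin

text \<open>A finite multigraph (parallel edges allowed, no loops) is given by a vertex set V,
an edge set E and an endpoint map ends :: 'e => 'a * 'a.\<close>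

definition multigraph :: "'a set \<Rightarrow> 'e set \<Rightarrow> ('e \<Rightarrow> 'a \<times> 'a) \<Rightarrow> bool" where
  "multigraph V E ends \<longleftrightarrow> finite V \<and> finite E \<and>
     (\<forall>e\<in>E. fst (ends e) \<in> V \<and> snd (ends e) \<in> V \<and> fst (ends e) \<noteq> snd (ends e))"

definition incident :: "('e \<Rightarrow> 'a \<times> 'a) \<Rightarrow> 'e \<Rightarrow> 'a \<Rightarrow> bool" where
  "incident ends e x \<longleftrightarrow> fst (ends e) = x \<or> snd (ends e) = x"

definition adj_rel :: "'e set \<Rightarrow> ('e \<Rightarrow> 'a \<times> 'a) \<Rightarrow> ('a \<times> 'a) set" where
  "adj_rel E ends = {(fst (ends e), snd (ends e)) | e. e \<in> E} \<union> {(snd (ends e), fst (ends e)) | e. e \<in> E}"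

definition connected_graph :: "'a set \<Rightarrow> 'e set \<Rightarrow> ('e \<Rightarrow> 'a \<times> 'a) \<Rightarrow> bool" where
  "connected_graph V E ends \<longleftrightarrow> V \<noteq> {} \<and> (\<forall>x\<in>V. \<forall>y\<in>V. (x, y) \<in> (adj_rel E ends)\<^sup>*)"

definition edge_connected :: "nat \<Rightarrow> 'a set \<Rightarrow> 'e set \<Rightarrow> ('e \<Rightarrow> 'a \<times> 'a) \<Rightarrow> bool" where
  "edge_connected k V E ends \<longleftrightarrow> (\<forall>F. F \<subseteq> E \<and> card F < k \<longrightarrow> connected_graph V (E - F) ends)"

text \<open>An orientation D: D e = True orients e from fst (ends e) to snd (ends e), otherwise reversed.\<close>
definition tail :: "('e \<Rightarrow> bool) \<Rightarrow> ('e \<Rightarrow> 'a \<times> 'a) \<Rightarrow> 'e \<Rightarrow> 'a" where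
  "tail D ends e = (if D e then fst (ends e) else snd (ends e))"

definition head :: "('e \<Rightarrow> bool) \<Rightarrow> ('e \<Rightarrow> 'a \<times> 'a) \<Rightarrow> 'e \<Rightarrow> 'a" where
  "head D ends e = (if D e then snd (ends e) else fst (ends e))"

definition outdeg :: "('e \<Rightarrow> bool) \<Rightarrow> 'e set \<Rightarrow> ('e \<Rightarrow> 'a \<times> 'a) \<Rightarrow> 'a \<Rightarrow> nat" where
  "outdeg D E ends x = card {e\<in>E. tail D ends e = x}"

definition indeg :: "('e \<Rightarrow> bool) \<Rightarrow> 'e set \<Rightarrow> ('e \<Rightarrow> 'a \<times> 'a) \<Rightarrow> 'a \<Rightarrow> nat" where
  "indeg D E ends x = card {e\<in>E. head D ends e = x}"

definition arcs :: "('e \<Rightarrow> bool) \<Rightarrow> 'e set \<Rightarrow> ('e \<Rightarrow> 'a \<times> 'a) \<Rightarrow> ('a \<times> 'a) set" where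
  "arcs D E ends = {(tail D ends e, head D ends e) | e. e \<in> E}"

definition strongly_connected_orientation ::
  "('e \<Rightarrow> bool) \<Rightarrow> 'a set \<Rightarrow> 'e set \<Rightarrow> ('e \<Rightarrow> 'a \<times> 'a) \<Rightarrow> bool" where
  "strongly_connected_orientation D V E ends \<longleftrightarrow> (\<forall>x\<in>V. \<forall>y\<in>V. (x, y) \<in> (arcs D E ends)\<^sup>*)"

text \<open>The class S_3, with Z_3 represented by integers modulo 3.\<close>
definition S3 :: "'a set \<Rightarrow> 'e set \<Rightarrow> ('e \<Rightarrow> 'a \<times> 'a) \<Rightarrow> bool" where
  "S3 V E ends \<longleftrightarrow> (\<forall>\<beta> :: 'a \<Rightarrow> int. (\<Sum>x\<in>V. \<beta> x) mod 3 = 0 \<longrightarrow>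
      (\<exists>D. strongly_connected_orientation D V E ends \<and>
           (\<forall>x\<in>V. (int (outdeg D E ends x) - int (indeg D E ends x)) mod 3 = \<beta> x mod 3)))"

text \<open>G_1 = G - u - v + ab: old edges are Some e, the new edge ab is None.\<close>
definition del2_add_edge_E :: "'e set \<Rightarrow> ('e \<Rightarrow> 'a \<times> 'a) \<Rightarrow> 'a \<Rightarrow> 'a \<Rightarrow> 'e option set" where
  "del2_add_edge_E E ends u v = Some ` {e\<in>E. \<not> incident ends e u \<and> \<not> incident ends e v} \<union> {None}"

definition del2_add_edge_ends :: "('e \<Rightarrow> 'a \<times> 'a) \<Rightarrow> 'a \<Rightarrow> 'a \<Rightarrow> 'e option \<Rightarrow> 'a \<times> 'a" where
  "del2_add_edge_ends ends a b eo = (case eo of None \<Rightarrow> (a, b) | Some e \<Rightarrow> ends e)"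

end

theory Submission
  imports Defs
begin

definition fI :: "('e \<Rightarrow> bool) \<Rightarrow> ('e \<Rightarrow> 'a \<times> 'a) \<Rightarrow> 'e \<Rightarrow> 'a \<Rightarrow> int" where
  "fI D ends e x = (if tail D ends e = x then 1 else 0) - (if head D ends e = x then 1 else 0)"

lemma card_filter_int: "finite E \<Longrightarrow> int (card {e\<in>E. P e}) = (\<Sum>e\<in>E. if P e then 1 else 0)"
proof -
  assume f: "finite E"
  have "(\<Sum>e\<in>E. (if P e then 1 else 0 :: int)) = (\<Sum>e\<in>E. of_bool (P e))" by (rule sum.cong) auto
  also have "\<dots> = int (card (E \<inter> {x. P x}))" using f by simp
  finally show ?thesis by (simp add: Collect_conj_eq Int_commute)
qed

lemma net_sum: "finite E \<Longrightarrow>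
  int (outdeg D E ends x) - int (indeg D E ends x) = (\<Sum>e\<in>E. fI D ends e x)"
  unfolding outdeg_def indeg_def fI_def
  by (simp add: card_filter_int sum_subtractf)

lemma fI_cong: "D e = D' e \<Longrightarrow> fI D ends e x = fI D' ends e x"
  unfolding fI_def tail_def head_def by simp

lemma fI_noinc: "\<not> incident ends e x \<Longrightarrow> fI D ends e x = 0"
  unfolding fI_def tail_def head_def incident_def by auto

lemma fI_to: "fst (ends e) \<noteq> snd (ends e) \<Longrightarrow> incident ends e z \<Longrightarrow> D e = (snd (ends e) = z) \<Longrightarrow>
  fI D ends e x = (if x = z then -1 else if incident ends e x then 1 else 0)"
  unfolding fI_def tail_def head_def incident_def by auto

lemma fI_from: "fst (ends e) \<noteq> snd (ends e) \<Longrightarrow> incident ends e z \<Longrightarrow> D e = (fst (ends e) = z) \<Longrightarrow>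
  fI D ends e x = (if x = z then 1 else if incident ends e x then -1 else 0)"
  unfolding fI_def tail_def head_def incident_def by auto

lemma head_to: "fst (ends e) \<noteq> snd (ends e) \<Longrightarrow> incident ends e z \<Longrightarrow> D e = (snd (ends e) = z) \<Longrightarrow>
  head D ends e = z"
  unfolding tail_def head_def incident_def by auto

lemma tail_from: "fst (ends e) \<noteq> snd (ends e) \<Longrightarrow> incident ends e z \<Longrightarrow> D e = (fst (ends e) = z) \<Longrightarrow>
  tail D ends e = z"
  unfolding tail_def head_def incident_def by auto

lemma tail_in: "tail D ends e \<in> {fst (ends e), snd (ends e)}"
  unfolding tail_def by auto
lemma head_in: "head D ends e \<in> {fst (ends e), snd (ends e)}"
  unfolding head_def by auto
lemma tail_ne_head: "fst (ends e) \<noteq> snd (ends e) \<Longrightarrow> tail D ends e \<noteq> head D ends e"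
  unfolding tail_def head_def by auto
lemma tail_inc: "incident ends e (tail D ends e)"
  unfolding tail_def incident_def by auto
lemma head_inc: "incident ends e (head D ends e)"
  unfolding head_def incident_def by auto

lemma sum_fI_edge: "finite V \<Longrightarrow> fst (ends e) \<in> V \<Longrightarrow> snd (ends e) \<in> V \<Longrightarrow> fst (ends e) \<noteq> snd (ends e)
   \<Longrightarrow> (\<Sum>x\<in>V. fI D ends e x) = 0"
proof -
  assume f: "finite V" and h: "fst (ends e) \<in> V" "snd (ends e) \<in> V" "fst (ends e) \<noteq> snd (ends e)"
  have t: "tail D ends e \<in> V" "head D ends e \<in> V" using tail_in[of D ends e] head_in[of D ends e] h by auto
  show ?thesis unfolding fI_def using f t
    by (simp add: sum_subtractf sum.delta)
qed

lemma sum_fI_zero: "finite V \<Longrightarrow> finite S \<Longrightarrow>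
  (\<forall>e\<in>S. fst (ends e) \<in> V \<and> snd (ends e) \<in> V \<and> fst (ends e) \<noteq> snd (ends e)) \<Longrightarrow>
  (\<Sum>x\<in>V. \<Sum>e\<in>S. fI D ends e x) = 0"
proof -
  assume a: "finite V" "finite S" "\<forall>e\<in>S. fst (ends e) \<in> V \<and> snd (ends e) \<in> V \<and> fst (ends e) \<noteq> snd (ends e)"
  have "(\<Sum>x\<in>V. \<Sum>e\<in>S. fI D ends e x) = (\<Sum>e\<in>S. \<Sum>x\<in>V. fI D ends e x)" by (rule sum.swap)
  also have "\<dots> = (\<Sum>e\<in>S. 0)" using a by (intro sum.cong refl sum_fI_edge) auto
  finally show ?thesis by simp
qed

lemma sum3: fixes c1 c2 :: int
  assumes "finite S" "A \<subseteq> B" "B \<subseteq> S"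
  shows "(\<Sum>e\<in>S. if e\<in>A then c1 else if e\<in>B then c2 else 0) = c1 * int (card A) + c2 * int (card B - card A)"
proof -
  have fB: "finite B" by (rule finite_subset[OF assms(3) assms(1)])
  have fA: "finite A" "finite B" using finite_subset[OF assms(2) fB] fB by auto
  define g where "g = (\<lambda>e. if e\<in>A then c1 else if e\<in>B then c2 else 0)"
  have 1: "sum g S = sum g B"
    using assms unfolding g_def by (intro sum.mono_neutral_right) auto
  have 2: "sum g B = sum g A + sum g (B - A)"
    using sum.subset_diff[OF assms(2) fB, of g] by simp
  have 3: "sum g A = (\<Sum>e\<in>A. c1)" unfolding g_def by (rule sum.cong) auto
  have 4: "sum g (B - A) = (\<Sum>e\<in>B - A. c2)" unfolding g_def by (rule sum.cong) auto
  have 5: "card (B - A) = card B - card A" by (rule card_Diff_subset[OF fA(1) assms(2)])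
  show ?thesis using 1 2 3 4 5 unfolding g_def[symmetric] by (simp add: mult.commute)
qed


lemma cut_lemma:
  assumes ec: "edge_connected k V E ends" and X: "X \<subseteq> V" "x \<in> X" "y \<in> V" "y \<notin> X"
    and c: "card {e\<in>E. (fst (ends e) \<in> X) \<noteq> (snd (ends e) \<in> X)} < k"
  shows False
proof -
  define F where "F = {e\<in>E. (fst (ends e) \<in> X) \<noteq> (snd (ends e) \<in> X)}"
  have "connected_graph V (E - F) ends" using ec c unfolding edge_connected_def F_def by auto
  then have xy: "(x, y) \<in> (adj_rel (E - F) ends)\<^sup>*" using X unfolding connected_graph_def by auto
  have "z \<in> X" if "(x, z) \<in> (adj_rel (E - F) ends)\<^sup>*" for z
    using that
  proof (induction rule: rtrancl_induct)
    case base then show ?case using X by simp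
  next
    case (step z w)
    from step(2) obtain e where e: "e \<in> E - F" "(z, w) = ends e \<or> (w, z) = ends e"
      unfolding adj_rel_def by auto
    have "(fst (ends e) \<in> X) = (snd (ends e) \<in> X)" using e(1) unfolding F_def by auto
    then show ?case using e(2) step(3) by (metis fst_conv snd_conv)
  qed
  then show False using xy X by auto
qed

lemma m3a: "(y::int) mod 3 = k \<Longrightarrow> \<exists>d. y = 3*d + k"
  by (metis div_mult_mod_eq mult.commute)
lemma m3b: "(a::int) - b = 3 * d \<Longrightarrow> a mod 3 = b mod 3"
  by (simp add: mod_eq_dvd_iff)
lemma m3d: obtains e k where "(y::int) = 3*e + k" "k = 0 \<or> k = 1 \<or> k = 2"
proof -
  have "y mod 3 \<in> {0,1,2}" by auto
  moreover obtain d where "y = 3*d + y mod 3" using m3a[of y "y mod 3"] by blast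
  ultimately show ?thesis by (intro that[of d "y mod 3"]) auto
qed

lemma arith3:
  fixes m s r :: nat and bu bv :: int
  assumes "m \<ge> 1" "r \<ge> 1" "m + s \<ge> 4" "s + r \<ge> 2"
  shows "\<exists>p q t. p \<le> m \<and> q \<le> s \<and> t \<le> r \<and> 1 \<le> p + q \<and> p + q + 1 \<le> m + s \<and>
     (int m + int s - 2 * (int p + int q)) mod 3 = bu mod 3 \<and>
     (2 * int p - int m - 2 * int t + int r) mod 3 = bv mod 3"
proof -
  obtain P :: nat and d1 where P: "1 \<le> P" "P \<le> 3" "int m + int s - 2 * int P - bu = 3 * d1"
  proof -
    obtain e k where ek: "int m + int s - bu = 3*e + k" "k = 0 \<or> k = 1 \<or> k = 2" using m3d by blast
    from ek(2) show ?thesis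
    proof (elim disjE)
      assume "k = 0" then show ?thesis using that[of 3 "e - 2"] ek(1) by simp
    next
      assume "k = 1" then show ?thesis using that[of 2 "e - 1"] ek(1) by simp
    next
      assume "k = 2" then show ?thesis using that[of 1 "e"] ek(1) by simp
    qed
  qed
  define hi where "hi = min P m"
  have hi: "1 \<le> hi" "hi \<le> P" "hi \<le> m" using P assms unfolding hi_def by auto
  have q1: "P - hi \<le> s" using hi P assms unfolding hi_def by auto
  obtain e k where ek: "2 * int hi - int m + int r - bv = 3*e + k" "k = 0 \<or> k = 1 \<or> k = 2" using m3d by blast
  have "\<exists>p q t d2. p \<le> m \<and> q \<le> s \<and> t \<le> r \<and> p + q = P \<and>
     (2 * int p - int m - 2 * int t + int r - bv = 3 * d2)"
  proof (cases "r \<ge> 2")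
    case True
    from ek(2) show ?thesis
    proof (elim disjE)
      assume "k = 0" then show ?thesis 
        using hi q1 True ek(1) by (intro exI[of _ hi] exI[of _ "P - hi"] exI[of _ 0] exI[of _ e]) auto
    next
      assume "k = 1" then show ?thesis 
        using hi q1 True ek(1) by (intro exI[of _ hi] exI[of _ "P - hi"] exI[of _ 2] exI[of _ "e - 1"]) auto
    next
      assume "k = 2" then show ?thesis 
        using hi q1 True ek(1) by (intro exI[of _ hi] exI[of _ "P - hi"] exI[of _ 1] exI[of _ e]) auto
    qed
  next
    case False
    then have r1: "r = 1" "s \<ge> 1" using assms by auto
    have q2: "P - (hi - 1) \<le> s" using hi P assms r1 unfolding hi_def by auto
    from ek(2) show ?thesis
    proof (elim disjE)
      assume "k = 0" then show ?thesis 
        using hi q1 r1 ek(1) by (intro exI[of _ hi] exI[of _ "P - hi"] exI[of _ 0] exI[of _ e]) auto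
    next
      assume "k = 2" then show ?thesis 
        using hi q1 r1 ek(1) by (intro exI[of _ hi] exI[of _ "P - hi"] exI[of _ 1] exI[of _ e]) auto
    next
      assume "k = 1" then show ?thesis 
        using hi q2 r1 ek(1) by (intro exI[of _ "hi - 1"] exI[of _ "P - (hi - 1)"] exI[of _ 1] exI[of _ "e - 1"]) (auto simp: of_nat_diff)
    qed
  qed
  then obtain p q t d2 where w: "p \<le> m" "q \<le> s" "t \<le> r" "p + q = P"
     "2 * int p - int m - 2 * int t + int r - bv = 3 * d2" by blast
  have c1: "(int m + int s - 2 * (int p + int q)) mod 3 = bu mod 3"
    using P(3) w(4) by (intro m3b[where d=d1]) (simp flip: of_nat_add)
  have c2: "(2 * int p - int m - 2 * int t + int r) mod 3 = bv mod 3"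
    using w(5) by (intro m3b[where d=d2]) simp
  show ?thesis using w c1 c2 P assms by (intro exI[of _ p] exI[of _ q] exI[of _ t]) auto
qed


lemma inc_two: "fst (ends e) \<noteq> snd (ends e) \<Longrightarrow> incident ends e x \<Longrightarrow> incident ends e y \<Longrightarrow> x \<noteq> y
  \<Longrightarrow> incident ends e z \<longleftrightarrow> (z = x \<or> z = y)"
  unfolding incident_def by auto

lemma tail_other: "fst (ends e) \<noteq> snd (ends e) \<Longrightarrow> incident ends e x \<Longrightarrow> incident ends e y \<Longrightarrow> x \<noteq> y
  \<Longrightarrow> head D ends e = x \<Longrightarrow> tail D ends e = y"
  unfolding incident_def head_def tail_def by (auto split: if_splits)

lemma head_other: "fst (ends e) \<noteq> snd (ends e) \<Longrightarrow> incident ends e x \<Longrightarrow> incident ends e y \<Longrightarrow> x \<noteq> y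
  \<Longrightarrow> tail D ends e = x \<Longrightarrow> head D ends e = y"
  unfolding incident_def head_def tail_def by (auto split: if_splits)

lemma mod_helper: "(a::int) mod 3 = (b - c) mod 3 \<Longrightarrow> (a + c) mod 3 = b mod 3"
  by (metis mod_add_left_eq diff_add_cancel)



theorem mainTheorem10:
  fixes V :: "'a set" and E :: "'e set" and ends :: "'e \<Rightarrow> 'a \<times> 'a"
    and u v a b :: 'a and ea eb :: 'e
  assumes "multigraph V E ends"
    and "edge_connected 4 V E ends"
    and "u \<in> V" and "v \<in> V"
    and "\<exists>e\<in>E. incident ends e u \<and> incident ends e v"
    and "card {e\<in>E. incident ends e v \<and> \<not> incident ends e u} \<ge> 3"
    and "ea \<in> E" and "eb \<in> E" and "ea \<noteq> eb"
    and "incident ends ea v" and "incident ends ea a"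
    and "incident ends eb v" and "incident ends eb b"
    and "a \<noteq> b" and "a \<notin> {u, v}" and "b \<notin> {u, v}"
    and "S3 (V - {u, v}) (del2_add_edge_E E ends u v) (del2_add_edge_ends ends a b)"
  shows "S3 V E ends"
proof -
  have finV: "finite V" and finE: "finite E" using assms(1) unfolding multigraph_def by auto
  have eok: "fst (ends e) \<in> V" "snd (ends e) \<in> V" "fst (ends e) \<noteq> snd (ends e)" if "e \<in> E" for e
    using assms(1) that unfolding multigraph_def by auto
  define Evt where "Evt = {e\<in>E. incident ends e v \<and> \<not> incident ends e u}"
  have uv: "u \<noteq> v"
  proof
    assume "u = v" then have "Evt = {}" unfolding Evt_def by auto
    moreover have "card Evt \<ge> 3" using assms(6) unfolding Evt_def .
    ultimately show False by simp
  qed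
  have av: "a \<noteq> v" "a \<noteq> u" "b \<noteq> v" "b \<noteq> u" using assms(15,16) by auto
  have ea_inc: "incident ends ea z \<longleftrightarrow> (z = v \<or> z = a)" for z
    using inc_two[OF eok(3)[OF assms(7)] assms(10,11)] av by auto
  have eb_inc: "incident ends eb z \<longleftrightarrow> (z = v \<or> z = b)" for z
    using inc_two[OF eok(3)[OF assms(8)] assms(12,13)] av by auto
  have aV: "a \<in> V" using eok[OF assms(7)] assms(11) unfolding incident_def by auto
  have bV: "b \<in> V" using eok[OF assms(8)] assms(13) unfolding incident_def by auto
  define Euv where "Euv = {e\<in>E. incident ends e u \<and> incident ends e v}"
  define Eus where "Eus = {e\<in>E. incident ends e u \<and> \<not> incident ends e v}"
  define Evr where "Evr = Evt - {ea, eb}"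
  define E0 where "E0 = {e\<in>E. \<not> incident ends e u \<and> \<not> incident ends e v}"
  define S where "S = Euv \<union> Eus \<union> Evr"
  define W where "W = V - {u, v}"
  define m where "m = card Euv"
  define s where "s = card Eus"
  define r where "r = card Evr"
  have eaEvt: "ea \<in> Evt" and ebEvt: "eb \<in> Evt"
    unfolding Evt_def using assms(7,8) ea_inc eb_inc uv av by auto
  have fins: "finite Euv" "finite Eus" "finite Evt" "finite Evr" "finite E0" "finite S"
    using finE unfolding Euv_def Eus_def Evt_def Evr_def E0_def S_def by auto
  have r1: "r \<ge> 1"
  proof -
    have "card Evr = card Evt - card {ea, eb}" unfolding Evr_def
      using eaEvt ebEvt fins by (intro card_Diff_subset) auto
    then show ?thesis using assms(6,9) unfolding r_def Evt_def by simp
  qed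
  have m1: "m \<ge> 1"
  proof -
    have "Euv \<noteq> {}" using assms(5) unfolding Euv_def by auto
    then show ?thesis unfolding m_def using fins by (simp add: Suc_le_eq card_gt_0_iff)
  qed
  have disj1: "Euv \<inter> Eus = {}" "(Euv \<union> Eus) \<inter> Evr = {}" "Eus \<inter> Evt = {}"
    unfolding Euv_def Eus_def Evr_def Evt_def by auto
  have ms4: "m + s \<ge> 4"
  proof (rule ccontr)
    assume "\<not> 4 \<le> m + s"
    moreover have "{e\<in>E. (fst (ends e) \<in> {u}) \<noteq> (snd (ends e) \<in> {u})} = Euv \<union> Eus"
      unfolding Euv_def Eus_def by (auto simp: incident_def dest: eok(3))
    moreover have "card (Euv \<union> Eus) = m + s" unfolding m_def s_def
      using fins disj1 by (simp add: card_Un_disjoint)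
    ultimately show False
      using cut_lemma[OF assms(2), of "{u}" u a] assms(3) aV av by auto
  qed
  have sr2: "s + r \<ge> 2"
  proof (rule ccontr)
    assume "\<not> 2 \<le> s + r"
    moreover have "{e\<in>E. (fst (ends e) \<in> {u, v}) \<noteq> (snd (ends e) \<in> {u, v})} = Eus \<union> Evt"
      unfolding Evt_def Eus_def using uv by (auto simp: incident_def dest: eok(3))
    moreover have "card (Eus \<union> Evt) = s + card Evt" unfolding s_def
      using fins disj1 by (simp add: card_Un_disjoint)
    moreover have "card Evr = card Evt - 2" unfolding Evr_def
      using eaEvt ebEvt fins assms(9) by (subst card_Diff_subset) auto
    moreover have "card Evt \<ge> 3" using assms(6) unfolding Evt_def .
    ultimately have "\<not> s + card Evt < 4" "card Evt \<ge> 3" "r = card Evt - 2"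
      using cut_lemma[OF assms(2), of "{u, v}" u a] assms(3,4) aV av unfolding r_def by auto
    then show False using \<open>\<not> 2 \<le> s + r\<close> by linarith
  qed
  show ?thesis unfolding S3_def
  proof (intro allI impI)
    fix \<beta> :: "'a \<Rightarrow> int"
    assume h\<beta>: "(\<Sum>x\<in>V. \<beta> x) mod 3 = 0"
    obtain p q t where pqt: "p \<le> m" "q \<le> s" "t \<le> r" "1 \<le> p + q" "p + q + 1 \<le> m + s"
      "(int m + int s - 2 * (int p + int q)) mod 3 = \<beta> u mod 3"
      "(2 * int p - int m - 2 * int t + int r) mod 3 = \<beta> v mod 3"
      using arith3[OF m1 r1 ms4 sr2, of "\<beta> u" "\<beta> v"] by blast
    obtain Pin where Pin: "Pin \<subseteq> Euv" "card Pin = p"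
      using obtain_subset_with_card_n[of p Euv] pqt(1) unfolding m_def by metis
    obtain Qin where Qin: "Qin \<subseteq> Eus" "card Qin = q"
      using obtain_subset_with_card_n[of q Eus] pqt(2) unfolding s_def by metis
    obtain Tin where Tin: "Tin \<subseteq> Evr" "card Tin = t"
      using obtain_subset_with_card_n[of t Evr] pqt(3) unfolding r_def by metis
    define PQ where "PQ = Pin \<union> Qin"
    have finPQ: "finite Pin" "finite Qin" "finite Tin" "finite PQ"
      using Pin Qin Tin fins finite_subset unfolding PQ_def by auto
    have cardPQ: "card PQ = p + q" unfolding PQ_def
      using finPQ Pin Qin disj1 by (subst card_Un_disjoint) auto
    have cardUS: "card (Euv \<union> Eus) = m + s" unfolding m_def s_def
      using fins disj1 by (simp add: card_Un_disjoint)
    have PQsub: "PQ \<subseteq> Euv \<union> Eus" unfolding PQ_def using Pin Qin by auto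
    have SE: "S \<subseteq> E" unfolding S_def Euv_def Eus_def Evr_def Evt_def by auto
    have incs: "\<And>e. e \<in> Euv \<Longrightarrow> incident ends e u \<and> incident ends e v"
      "\<And>e. e \<in> Eus \<Longrightarrow> incident ends e u \<and> \<not> incident ends e v"
      "\<And>e. e \<in> Evr \<Longrightarrow> \<not> incident ends e u \<and> incident ends e v"
      "\<And>e. e \<in> E0 \<Longrightarrow> \<not> incident ends e u \<and> \<not> incident ends e v"
      unfolding Euv_def Eus_def Evr_def Evt_def E0_def by auto
    define D0 where "D0 = (\<lambda>e. if e \<in> PQ then snd (ends e) = u else if e \<in> Euv \<union> Eus then fst (ends e) = u
       else if e \<in> Tin then snd (ends e) = v else fst (ends e) = v)"
    define netS where "netS x = (\<Sum>e\<in>S. fI D0 ends e x)" for x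
    have NU: "netS u = int m + int s - 2 * (int p + int q)"
    proof -
      have "netS u = (\<Sum>e\<in>S. if e \<in> PQ then -1 else if e \<in> Euv \<union> Eus then 1 else 0)"
        unfolding netS_def
      proof (rule sum.cong[OF refl])
        fix e assume eS: "e \<in> S"
        then have eE: "e \<in> E" using SE by auto
        show "fI D0 ends e u = (if e \<in> PQ then -1 else if e \<in> Euv \<union> Eus then 1 else 0)"
        proof (cases "e \<in> Euv \<union> Eus")
          case True
          then have iu: "incident ends e u" using incs by auto
          show ?thesis
          proof (cases "e \<in> PQ")
            case True
            then have "D0 e = (snd (ends e) = u)" unfolding D0_def by simp
            then show ?thesis using fI_to[OF eok(3)[OF eE] iu, of D0 u] True by simp
          next
            case False
            then have "D0 e = (fst (ends e) = u)" using \<open>e \<in> Euv \<union> Eus\<close> unfolding D0_def by simp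
            then show ?thesis using fI_from[OF eok(3)[OF eE] iu, of D0 u] False \<open>e \<in> Euv \<union> Eus\<close> by simp
          qed
        next
          case False
          then have "\<not> incident ends e u" "e \<notin> PQ" using eS PQsub incs unfolding S_def by auto
          then show ?thesis using fI_noinc[of ends e u D0] False by simp
        qed
      qed
      also have "\<dots> = (-1) * int (card PQ) + 1 * int (card (Euv \<union> Eus) - card PQ)"
        by (rule sum3) (use fins PQsub in \<open>auto simp: S_def\<close>)
      finally show ?thesis using cardPQ cardUS pqt(5) by (simp add: of_nat_diff)
    qed
    have NV: "netS v = 2 * int p - int m - 2 * int t + int r"
    proof -
      have "netS v = (\<Sum>e\<in>S. (if e \<in> Pin then 1 else if e \<in> Euv then -1 else 0)
                           + (if e \<in> Tin then -1 else if e \<in> Evr then 1 else 0))"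
        unfolding netS_def
      proof (rule sum.cong[OF refl])
        fix e assume eS: "e \<in> S"
        then have eE: "e \<in> E" using SE by auto
        show "fI D0 ends e v = (if e \<in> Pin then 1 else if e \<in> Euv then -1 else 0)
                           + (if e \<in> Tin then -1 else if e \<in> Evr then 1 else 0)"
        proof -
          consider (A) "e \<in> Euv" | (B) "e \<in> Eus" | (C) "e \<in> Evr" using eS unfolding S_def by auto
          then show ?thesis
          proof cases
            case A
            then have i: "incident ends e u" "incident ends e v" "e \<notin> Evr" "e \<notin> Tin"
              using incs Tin by blast+
            show ?thesis
            proof (cases "e \<in> Pin")
              case True
              then have "D0 e = (snd (ends e) = u)" unfolding D0_def PQ_def by simp
              then show ?thesis using fI_to[OF eok(3)[OF eE] i(1), of D0 v] True i uv by simp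
            next
              case False
              then have "e \<notin> PQ" using A disj1 Qin unfolding PQ_def by auto
              then have "D0 e = (fst (ends e) = u)" using A unfolding D0_def by simp
              then show ?thesis using fI_from[OF eok(3)[OF eE] i(1), of D0 v] False i uv A by simp
            qed
          next
            case B
            then have "\<not> incident ends e v" "e \<notin> Pin" "e \<notin> Euv" "e \<notin> Tin" "e \<notin> Evr"
              using incs Pin Tin disj1 by blast+
            then show ?thesis using fI_noinc[of ends e v D0] by simp
          next
            case C
            then have i: "\<not> incident ends e u" "incident ends e v" "e \<notin> Pin" "e \<notin> Euv" "e \<notin> PQ"
              "e \<notin> Euv \<union> Eus"
              using incs Pin PQsub by blast+
            show ?thesis
            proof (cases "e \<in> Tin")
              case True
              then have "D0 e = (snd (ends e) = v)" using i unfolding D0_def by simp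
              then show ?thesis using fI_to[OF eok(3)[OF eE] i(2), of D0 v] True i by simp
            next
              case False
              then have "D0 e = (fst (ends e) = v)" using i unfolding D0_def by simp
              then show ?thesis using fI_from[OF eok(3)[OF eE] i(2), of D0 v] False i C by simp
            qed
          qed
        qed
      qed
      also have "\<dots> = (\<Sum>e\<in>S. (if e \<in> Pin then 1 else if e \<in> Euv then -1 else 0))
                    + (\<Sum>e\<in>S. (if e \<in> Tin then -1 else if e \<in> Evr then 1 else 0))"
        by (rule sum.distrib)
      also have "(\<Sum>e\<in>S. (if e \<in> Pin then 1 else if e \<in> Euv then -1 else 0)) = 1 * int (card Pin) + (-1) * int (card Euv - card Pin)"
        by (rule sum3) (use fins Pin in \<open>auto simp: S_def\<close>)
      also have "(\<Sum>e\<in>S. (if e \<in> Tin then -1 else if e \<in> Evr then 1 else 0)) = (-1) * int (card Tin) + 1 * int (card Evr - card Tin)"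
        by (rule sum3) (use fins Tin in \<open>auto simp: S_def\<close>)
      finally show ?thesis using Pin Tin pqt(1,3) unfolding m_def r_def by (simp add: of_nat_diff)
    qed
    have zeroV: "(\<Sum>x\<in>V. netS x) = 0" unfolding netS_def
      using sum_fI_zero[OF finV fins(6), of ends D0] SE eok by blast
    have Vsplit: "V = insert u (insert v W)" unfolding W_def using assms(3,4) by auto
    have uvW: "u \<notin> insert v W" "v \<notin> W" "finite W" using uv finV unfolding W_def by auto
    have sumV: "(\<Sum>x\<in>V. f x) = f u + (f v + (\<Sum>x\<in>W. f x))" for f :: "'a \<Rightarrow> int"
      unfolding Vsplit using uvW by simp
    define \<beta>1 where "\<beta>1 x = \<beta> x - netS x" for x
    have sum\<beta>1: "(\<Sum>x\<in>W. \<beta>1 x) mod 3 = 0"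
    proof -
      have e1: "(\<Sum>x\<in>W. \<beta>1 x) = (\<Sum>x\<in>W. \<beta> x) - (\<Sum>x\<in>W. netS x)"
        unfolding \<beta>1_def by (rule sum_subtractf)
      have e2: "(\<Sum>x\<in>W. netS x) = - netS u - netS v" using zeroV sumV[of netS] by simp
      have d1: "3 dvd (\<Sum>x\<in>V. \<beta> x)" using h\<beta> by presburger
      have d2: "3 dvd (netS u - \<beta> u)" using pqt(6) NU by (simp add: mod_eq_dvd_iff)
      have d3: "3 dvd (netS v - \<beta> v)" using pqt(7) NV by (simp add: mod_eq_dvd_iff)
      have "(\<Sum>x\<in>W. \<beta>1 x) = (\<Sum>x\<in>V. \<beta> x) + (netS u - \<beta> u) + (netS v - \<beta> v)"
        using e1 e2 sumV[of \<beta>] by simp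
      then have "3 dvd (\<Sum>x\<in>W. \<beta>1 x)" using d1 d2 d3 by simp
      then show ?thesis by simp
    qed
    define E1 where "E1 = del2_add_edge_E E ends u v"
    define ends1 where "ends1 = del2_add_edge_ends ends a b"
    obtain D1 where D1s: "strongly_connected_orientation D1 W E1 ends1"
      and D1c: "\<And>x. x \<in> W \<Longrightarrow> (int (outdeg D1 E1 ends1 x) - int (indeg D1 E1 ends1 x)) mod 3 = \<beta>1 x mod 3"
    proof -
      have "\<exists>D1. strongly_connected_orientation D1 W E1 ends1 \<and>
        (\<forall>x\<in>W. (int (outdeg D1 E1 ends1 x) - int (indeg D1 E1 ends1 x)) mod 3 = \<beta>1 x mod 3)"
        using assms(17)[unfolded S3_def, rule_format, OF sum\<beta>1[unfolded W_def]]
        unfolding W_def E1_def ends1_def .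
      then show ?thesis using that by blast
    qed
    have E1eq: "E1 = insert None (Some ` E0)" unfolding E1_def del2_add_edge_E_def E0_def by auto
    have ends1_Some: "ends1 (Some e) = ends e" for e unfolding ends1_def del2_add_edge_ends_def by simp
    have ends1_None: "ends1 None = (a, b)" unfolding ends1_def del2_add_edge_ends_def by simp
    define D where "D = (\<lambda>e. if e \<in> E0 then D1 (Some e)
       else if e = ea then (if D1 None then snd (ends ea) = v else fst (ends ea) = v)
       else if e = eb then (if D1 None then fst (ends eb) = v else snd (ends eb) = v) else D0 e)"
    have eab_notE0: "ea \<notin> E0" "eb \<notin> E0" using assms(10,12) unfolding E0_def by auto
    have Dea: "D ea = (if D1 None then snd (ends ea) = v else fst (ends ea) = v)"
      unfolding D_def using eab_notE0 by simp
    have Deb: "D eb = (if D1 None then fst (ends eb) = v else snd (ends eb) = v)"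
      unfolding D_def using eab_notE0 assms(9) by simp
    have eab_notS: "ea \<notin> S" "eb \<notin> S"
      unfolding S_def Evr_def using incs(1,2) ea_inc eb_inc av uv by auto
    have DS: "D e = D0 e" if "e \<in> S" for e
    proof -
      have "e \<notin> E0" using that incs unfolding S_def by blast
      then show ?thesis unfolding D_def using that eab_notS by auto
    qed
    have fea: "fI D ends ea x = (if D1 None then (if x = v then -1 else if x = a then 1 else 0)
                                  else (if x = v then 1 else if x = a then -1 else 0))" for x
    proof (cases "D1 None")
      case True
      then have "D ea = (snd (ends ea) = v)" using Dea by simp
      then show ?thesis using fI_to[OF eok(3)[OF assms(7)] assms(10), of D x] ea_inc True by simp
    next
      case False
      then have "D ea = (fst (ends ea) = v)" using Dea by simp
      then show ?thesis using fI_from[OF eok(3)[OF assms(7)] assms(10), of D x] ea_inc False by simp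
    qed
    have feb: "fI D ends eb x = (if D1 None then (if x = v then 1 else if x = b then -1 else 0)
                                  else (if x = v then -1 else if x = b then 1 else 0))" for x
    proof (cases "D1 None")
      case True
      then have "D eb = (fst (ends eb) = v)" using Deb by simp
      then show ?thesis using fI_from[OF eok(3)[OF assms(8)] assms(12), of D x] eb_inc True by simp
    next
      case False
      then have "D eb = (snd (ends eb) = v)" using Deb by simp
      then show ?thesis using fI_to[OF eok(3)[OF assms(8)] assms(12), of D x] eb_inc False by simp
    qed
    have fN: "fI D1 ends1 None x = (if D1 None then (if x = a then 1 else if x = b then -1 else 0)
                                  else (if x = b then 1 else if x = a then -1 else 0))" for x
      unfolding fI_def tail_def head_def ends1_None using assms(14) by auto
    have Esplit: "E = E0 \<union> insert ea (insert eb S)"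
      unfolding E0_def S_def Euv_def Eus_def Evr_def Evt_def using assms(7,8) by auto
    have Edisj: "E0 \<inter> insert ea (insert eb S) = {}"
      using eab_notE0 incs unfolding S_def by blast
    have netG: "int (outdeg D E ends x) - int (indeg D E ends x)
        = (\<Sum>e\<in>E0. fI D ends e x) + fI D ends ea x + fI D ends eb x + netS x" for x
    proof -
      have "int (outdeg D E ends x) - int (indeg D E ends x) = (\<Sum>e\<in>E. fI D ends e x)"
        by (rule net_sum[OF finE])
      also have "\<dots> = (\<Sum>e\<in>E0. fI D ends e x) + (\<Sum>e\<in>insert ea (insert eb S). fI D ends e x)"
        unfolding Esplit using fins Edisj by (intro sum.union_disjoint) auto
      also have "(\<Sum>e\<in>insert ea (insert eb S). fI D ends e x) = fI D ends ea x + (fI D ends eb x + (\<Sum>e\<in>S. fI D ends e x))"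
        using fins eab_notS assms(9) by simp
      also have "(\<Sum>e\<in>S. fI D ends e x) = netS x" unfolding netS_def
        using DS by (intro sum.cong[OF refl] fI_cong) auto
      finally show ?thesis by simp
    qed
    have net1: "int (outdeg D1 E1 ends1 x) - int (indeg D1 E1 ends1 x)
        = (\<Sum>e\<in>E0. fI D ends e x) + fI D1 ends1 None x" for x
    proof -
      have finE1: "finite E1" using E1eq fins by simp
      have "int (outdeg D1 E1 ends1 x) - int (indeg D1 E1 ends1 x) = (\<Sum>eo\<in>E1. fI D1 ends1 eo x)"
        by (rule net_sum[OF finE1])
      also have "\<dots> = fI D1 ends1 None x + (\<Sum>eo\<in>Some ` E0. fI D1 ends1 eo x)"
        unfolding E1eq using fins by (subst sum.insert) auto
      also have "(\<Sum>eo\<in>Some ` E0. fI D1 ends1 eo x) = (\<Sum>e\<in>E0. fI D1 ends1 (Some e) x)"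
        by (subst sum.reindex) auto
      also have "\<dots> = (\<Sum>e\<in>E0. fI D ends e x)"
        by (rule sum.cong[OF refl]) (simp add: fI_def tail_def head_def ends1_Some D_def)
      finally show ?thesis by simp
    qed
    have E0zero: "(\<Sum>e\<in>E0. fI D ends e y) = 0" if "y = u \<or> y = v" for y
    proof (rule sum.neutral, rule ballI)
      fix e assume "e \<in> E0"
      then have "\<not> incident ends e y" using that incs(4) by blast
      then show "fI D ends e y = 0" by (rule fI_noinc)
    qed
    have cong: "(int (outdeg D E ends x) - int (indeg D E ends x)) mod 3 = \<beta> x mod 3" if xV: "x \<in> V" for x
    proof -
      consider (U) "x = u" | (VV) "x = v" | (WW) "x \<in> W" using xV unfolding W_def by auto
      then show ?thesis
      proof cases
        case U
        then have "int (outdeg D E ends x) - int (indeg D E ends x) = netS u"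
          using netG[of x] E0zero[of x] fea[of x] feb[of x] uv av by simp
        then show ?thesis using U NU pqt(6) by simp
      next
        case VV
        then have "int (outdeg D E ends x) - int (indeg D E ends x) = netS v"
          using netG[of x] E0zero[of x] fea[of x] feb[of x] uv av by simp
        then show ?thesis using VV NV pqt(7) by simp
      next
        case WW
        then have xv: "x \<noteq> v" unfolding W_def by auto
        have "fI D ends ea x + fI D ends eb x = fI D1 ends1 None x"
          using fea[of x] feb[of x] fN[of x] xv assms(14) by auto
        then have "int (outdeg D E ends x) - int (indeg D E ends x)
           = (int (outdeg D1 E1 ends1 x) - int (indeg D1 E1 ends1 x)) + netS x"
          using netG[of x] net1[of x] by simp
        moreover have "(int (outdeg D1 E1 ends1 x) - int (indeg D1 E1 ends1 x)) mod 3 = (\<beta> x - netS x) mod 3"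
          using D1c[OF WW] unfolding \<beta>1_def .
        ultimately show ?thesis using mod_helper by simp
      qed
    qed
    define R where "R = arcs D E ends"
    have inR: "(tail D ends e, head D ends e) \<in> R" if "e \<in> E" for e
      unfolding R_def arcs_def using that by blast
    have eabR: "if D1 None then (a, v) \<in> R \<and> (v, b) \<in> R else (v, a) \<in> R \<and> (b, v) \<in> R"
    proof (cases "D1 None")
      case True
      have h1: "head D ends ea = v" using head_to[OF eok(3)[OF assms(7)] assms(10), of D] Dea True by simp
      have t1: "tail D ends ea = a" using tail_other[OF eok(3)[OF assms(7)] assms(10,11) av(1)[symmetric] h1] .
      have t2: "tail D ends eb = v" using tail_from[OF eok(3)[OF assms(8)] assms(12), of D] Deb True by simp
      have h2: "head D ends eb = b" using head_other[OF eok(3)[OF assms(8)] assms(12,13) av(3)[symmetric] t2] .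
      show ?thesis using True inR[OF assms(7)] inR[OF assms(8)] h1 t1 h2 t2 by simp
    next
      case False
      have t1: "tail D ends ea = v" using tail_from[OF eok(3)[OF assms(7)] assms(10), of D] Dea False by simp
      have h1: "head D ends ea = a" using head_other[OF eok(3)[OF assms(7)] assms(10,11) av(1)[symmetric] t1] .
      have h2: "head D ends eb = v" using head_to[OF eok(3)[OF assms(8)] assms(12), of D] Deb False by simp
      have t2: "tail D ends eb = b" using tail_other[OF eok(3)[OF assms(8)] assms(12,13) av(3)[symmetric] h2] .
      show ?thesis using False inR[OF assms(7)] inR[OF assms(8)] h1 t1 h2 t2 by simp
    qed
    have R1sub: "arcs D1 E1 ends1 \<subseteq> R\<^sup>*"
    proof
      fix z assume "z \<in> arcs D1 E1 ends1"
      then obtain eo where eo: "eo \<in> E1" "z = (tail D1 ends1 eo, head D1 ends1 eo)"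
        unfolding arcs_def by blast
      show "z \<in> R\<^sup>*"
      proof (cases eo)
        case None
        show ?thesis
        proof (cases "D1 None")
          case True
          then have "z = (a, b)" using eo None ends1_None by (simp add: tail_def head_def)
          moreover have "(a, v) \<in> R" "(v, b) \<in> R" using eabR True by auto
          ultimately show ?thesis by (meson converse_rtrancl_into_rtrancl r_into_rtrancl)
        next
          case False
          then have "z = (b, a)" using eo None ends1_None by (simp add: tail_def head_def)
          moreover have "(v, a) \<in> R" "(b, v) \<in> R" using eabR False by auto
          ultimately show ?thesis by (meson converse_rtrancl_into_rtrancl r_into_rtrancl)
        qed
      next
        case (Some e)
        then have eE0: "e \<in> E0" using eo E1eq by auto
        then have eE: "e \<in> E" unfolding E0_def by auto
        have "z = (tail D ends e, head D ends e)"
          using eo Some eE0 ends1_Some[of e] unfolding tail_def head_def D_def by simp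
        then show ?thesis using inR[OF eE] by auto
      qed
    qed
    then have R1star: "(arcs D1 E1 ends1)\<^sup>* \<subseteq> R\<^sup>*" by (rule rtrancl_subset_rtrancl)
    have aW: "a \<in> W" "b \<in> W" unfolding W_def using aV bV assms(15,16) by auto
    have reachW: "(a, x) \<in> R\<^sup>* \<and> (x, a) \<in> R\<^sup>*" if "x \<in> W" for x
    proof -
      have "(a, x) \<in> (arcs D1 E1 ends1)\<^sup>*" "(x, a) \<in> (arcs D1 E1 ends1)\<^sup>*"
        using D1s aW(1) that unfolding strongly_connected_orientation_def by auto
      then show ?thesis using R1star by auto
    qed
    have reachv: "(a, v) \<in> R\<^sup>* \<and> (v, a) \<in> R\<^sup>*"
    proof (cases "D1 None")
      case True
      then have "(a, v) \<in> R" "(v, b) \<in> R" using eabR by auto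
      moreover have "(b, a) \<in> R\<^sup>*" using reachW[OF aW(2)] by simp
      ultimately show ?thesis by (meson converse_rtrancl_into_rtrancl r_into_rtrancl)
    next
      case False
      then have "(v, a) \<in> R" "(b, v) \<in> R" using eabR by auto
      moreover have "(a, b) \<in> R\<^sup>*" using reachW[OF aW(2)] by simp
      ultimately show ?thesis by (meson rtrancl_into_rtrancl r_into_rtrancl)
    qed
    have reach1: "(a, x) \<in> R\<^sup>* \<and> (x, a) \<in> R\<^sup>*" if "x \<in> V" "x \<noteq> u" for x
    proof (cases "x = v")
      case True then show ?thesis using reachv by simp
    next
      case False then show ?thesis using reachW that unfolding W_def by auto
    qed
    have DU: "D e = D0 e" if "e \<in> Euv \<union> Eus" for e
      using DS that unfolding S_def by auto
    have reachu: "(a, u) \<in> R\<^sup>* \<and> (u, a) \<in> R\<^sup>*"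
    proof
      have "PQ \<noteq> {}" using cardPQ pqt(4) by auto
      then obtain e1 where e1: "e1 \<in> PQ" by blast
      then have e1U: "e1 \<in> Euv \<union> Eus" using PQsub by auto
      then have e1E: "e1 \<in> E" and iu: "incident ends e1 u" using incs(1,2) unfolding Euv_def Eus_def by blast+
      have "D e1 = (snd (ends e1) = u)" using DU[OF e1U] e1 unfolding D0_def by simp
      then have h: "head D ends e1 = u" by (rule head_to[OF eok(3)[OF e1E] iu])
      have tV: "tail D ends e1 \<in> V" using tail_in[of D ends e1] eok[OF e1E] by auto
      have tu: "tail D ends e1 \<noteq> u" using tail_ne_head[where ends=ends and e=e1 and D=D, OF eok(3)[OF e1E]] h by simp
      show "(a, u) \<in> R\<^sup>*" using reach1[OF tV tu] inR[OF e1E] h by (metis rtrancl.rtrancl_into_rtrancl)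
    next
      have "PQ \<noteq> Euv \<union> Eus" using cardPQ cardUS pqt(5) by auto
      then obtain e2 where e2: "e2 \<in> Euv \<union> Eus" "e2 \<notin> PQ" using PQsub by blast
      then have e2E: "e2 \<in> E" and iu: "incident ends e2 u" using incs(1,2) unfolding Euv_def Eus_def by blast+
      have "D e2 = (fst (ends e2) = u)" using DU[OF e2(1)] e2 unfolding D0_def by simp
      then have t: "tail D ends e2 = u" by (rule tail_from[OF eok(3)[OF e2E] iu])
      have hV: "head D ends e2 \<in> V" using head_in[of D ends e2] eok[OF e2E] by auto
      have hu: "head D ends e2 \<noteq> u" using tail_ne_head[where ends=ends and e=e2 and D=D, OF eok(3)[OF e2E]] t by simp
      show "(u, a) \<in> R\<^sup>*" using reach1[OF hV hu] inR[OF e2E] t by (metis converse_rtrancl_into_rtrancl)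
    qed
    have reach: "(a, x) \<in> R\<^sup>* \<and> (x, a) \<in> R\<^sup>*" if "x \<in> V" for x
      using reach1[OF that] reachu by (cases "x = u") auto
    have "strongly_connected_orientation D V E ends"
      unfolding strongly_connected_orientation_def R_def[symmetric]
      using reach by (blast intro: rtrancl_trans)
    then show "\<exists>D. strongly_connected_orientation D V E ends \<and>
       (\<forall>x\<in>V. (int (outdeg D E ends x) - int (indeg D E ends x)) mod 3 = \<beta> x mod 3)"
      using cong by blast
  qed
qed

end
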